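(* Let $n,m,\ell$ be positive integers. Then $$\sum_{j=0}^{n-m-1}\binom{m-\ell+2j}{j}\,\mathcal Y_n\big(2^{\{\ell-j\}},1^{\{m-\ell+2j\}}\big)=\frac{1}{(m+1)(\ell+1)}\binom{n-1}{m}\binom{n-1}{\ell}.$$
   Context: Let $\zeta_n=e^{2\pi\sqrt{-1}/n}$. For positive integers $s_1,\dots,s_m$, define $\mathfrak Z_n(s_1,\dots,s_m):=\sum_{1\le i_1<\cdots<i_m\le n-1}\prod_{k=1}^{m}(1-\zeta_n^{i_k})^{-s_k}$ (equal to $0$ if $m>n-1$). Define $\mathcal Y_n(s_1,\dots,s_m):=\sum_{\sigma}\mathfrak Z_n(\sigma)$, where $\sigma$ runs over all distinct rearrangements of $(s_1,\dots,s_m)$. Notation: $a^{\{k\}}$ denotes the block $a,\dots,a$ of length $k$; any $\mathcal Y_n$ term in which some block has negative length is interpreted as $0$, and a sum whose upper limit is below its lower limit is $0$. Binomial coefficients $\binom{a}{b}$ are $0$ when $b<0$ or $b>a\ge0$. *)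

theory Defs
  imports Complex_Main "HOL-Library.Multiset"
begin

definition zeta :: "nat \<Rightarrow> complex" where
  "zeta n = exp (2 * of_real pi * \<i> / of_nat n)"

text \<open>Multiple sum: sum over 1 \<le> i_1 < ... < i_m \<le> n-1, encoded as m-element subsets
  of {1..n-1} listed increasingly.\<close>
definition Zfrak :: "nat \<Rightarrow> nat list \<Rightarrow> complex" where
  "Zfrak n s = (\<Sum>S \<in> {S. S \<subseteq> {1..n-1} \<and> card S = length s}.
      \<Prod>k<length s. inverse ((1 - zeta n ^ (sorted_list_of_set S ! k)) ^ (s ! k)))"

definition Ysum :: "nat \<Rightarrow> nat list \<Rightarrow> complex" where
  "Ysum n s = (\<Sum>t \<in> {t. mset t = mset s}. Zfrak n t)"

end

theory Submission
  imports Defs "HOL-Computational_Algebra.Computational_Algebra"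
begin

lemma zeta_cis: "zeta n = cis (2 * pi / real n)"
proof -
  have "2 * complex_of_real pi * \<i> / of_nat n = \<i> * complex_of_real (2 * pi / real n)"
    by (simp add: field_simps)
  then show ?thesis by (simp add: zeta_def cis_conv_exp mult_ac)
qed

lemma zeta_pow: "zeta n ^ k = cis (2 * pi * real k / real n)"
  by (simp add: zeta_cis DeMoivre mult_ac)

lemma prod_roots_unity:
  assumes n: "n > 0"
  shows "(\<Prod>k<n. w - zeta n ^ k) = w ^ n - 1"
proof -
  define p :: "complex poly" where "p = monom 1 n + [:-1:]"
  have pp: "poly p z = z ^ n - 1" for z by (simp add: p_def poly_monom)
  have deg: "degree p = n" unfolding p_def using n
    by (subst degree_add_eq_left) (auto simp: degree_monom_eq)
  have c0: "coeff [:-1:] n = (0::complex)" using n by (cases n) auto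
  have lc: "lead_coeff p = 1" using deg n c0 by (simp add: p_def)
  have pd: "pderiv p = monom (of_nat n) (n - 1)"
    by (simp add: p_def pderiv_add pderiv_monom pderiv_pCons)
  have rsq: "rsquarefree p"
    unfolding rsquarefree_roots
  proof (intro allI notI)
    fix a assume "poly p a = 0 \<and> poly (pderiv p) a = 0"
    then have "a ^ n = 1" "of_nat n * a ^ (n - 1) = 0" by (auto simp: pp pd poly_monom)
    then show False using n by (cases "a = 0") (auto simp: power_0_left)
  qed
  have "smult (lead_coeff p) (\<Prod>z|poly p z = 0. [:-z, 1:]) = p"
    by (rule complex_poly_decompose_rsquarefree[OF rsq])
  then have "(\<Prod>z|z ^ n = 1. [:-z, 1:]) = p" using lc by (simp add: pp)
  then have "poly (\<Prod>z|z ^ n = 1. [:-z, 1:]) w = w ^ n - 1" by (simp add: pp)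
  then have "(\<Prod>z|z ^ n = 1. w - z) = w ^ n - 1" by (simp add: poly_prod)
  moreover have "(\<Prod>k<n. w - cis (2 * pi * real k / real n)) = (\<Prod>z|z ^ n = 1. w - z)"
    by (rule prod.reindex_bij_betw[OF bij_betw_roots_unity[OF n], where g = "\<lambda>z. w - z"])
  ultimately show ?thesis by (simp add: zeta_pow)
qed


lemma prod_zeta_1:
  assumes n: "n > 0"
  shows "(\<Prod>k\<in>{1..n-1}. w - zeta n ^ k) = (\<Sum>k<n. w ^ k)"
proof -
  define q :: "complex poly" where "q = (\<Prod>k\<in>{1..n-1}. [:-(zeta n ^ k), 1:])"
  define r :: "complex poly" where "r = (\<Sum>k<n. monom 1 k)"
  have split: "{..<n} = insert 0 {1..n-1}" using n by auto
  have "poly ([:-1,1:] * q) = poly ([:-1,1:] * r)"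
  proof
    fix w
    have "poly ([:-1,1:] * q) w = (\<Prod>k<n. w - zeta n ^ k)"
      by (simp add: q_def poly_prod split algebra_simps)
    also have "\<dots> = w ^ n - 1" by (rule prod_roots_unity[OF n])
    also have "\<dots> = (w - 1) * (\<Sum>k<n. w ^ k)" by (rule power_diff_1_eq)
    also have "\<dots> = poly ([:-1,1:] * r) w" by (simp add: r_def poly_sum poly_monom algebra_simps)
    finally show "poly ([:-1,1:] * q) w = poly ([:-1,1:] * r) w" .
  qed
  then have "[:-1,1:] * q = [:-1,1:] * r" by (simp only: poly_eq_poly_eq_iff)
  moreover have "[:-1,1:] \<noteq> (0::complex poly)" by simp
  ultimately have "q = r" using mult_left_cancel by blast
  then have "poly q w = poly r w" by simp
  then show ?thesis by (simp add: q_def r_def poly_prod poly_sum poly_monom)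
qed

lemma zeta_ne1:
  assumes "0 < k" "k < n"
  shows "zeta n ^ k \<noteq> 1"
proof
  assume h: "zeta n ^ k = 1"
  have n: "n > 0" using assms by simp
  have inj: "inj_on (\<lambda>k. cis (2 * pi * real k / real n)) {..<n}"
    using bij_betw_roots_unity[OF n] by (simp add: bij_betw_def)
  have "cis (2 * pi * real k / real n) = cis (2 * pi * real 0 / real n)"
    using h by (simp add: zeta_pow)
  then have "k = 0" using inj_onD[OF inj] assms n by blast
  then show False using assms by simp
qed

lemma binsum: "(\<Sum>k<n. (1 + t) ^ k) = (\<Sum>k<n. of_nat (n choose Suc k) * (t::complex) ^ k)"
proof (induction n)
  case 0
  then show ?case by simp
next
  case (Suc n)
  have bin: "(1 + t) ^ n = (\<Sum>k\<le>n. of_nat (n choose k) * t ^ k)"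
    using binomial_ring[of t 1 n] by (simp add: add.commute mult_ac)
  have "(\<Sum>k<Suc n. (1 + t) ^ k) = (\<Sum>k<n. of_nat (n choose Suc k) * t ^ k) + (1 + t) ^ n"
    using Suc by simp
  also have "\<dots> = (\<Sum>k<Suc n. of_nat (n choose Suc k) * t ^ k) + (\<Sum>k<Suc n. of_nat (n choose k) * t ^ k)"
    using bin by (simp add: lessThan_Suc_atMost[symmetric])
  also have "\<dots> = (\<Sum>k<Suc n. of_nat (Suc n choose Suc k) * t ^ k)"
    by (simp add: sum.distrib[symmetric] algebra_simps)
  finally show ?case .
qed

lemma prod_E:
  fixes g :: "'a \<Rightarrow> complex"
  assumes fin: "finite I"
  shows "(\<Prod>i\<in>I. 1 + t * g i) = (\<Sum>k\<le>card I. (\<Sum>S\<in>{S. S \<subseteq> I \<and> card S = k}. prod g S) * t ^ k)"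
proof -
  have "(\<Prod>i\<in>I. t * g i + 1) = (\<Sum>X\<in>Pow I. (\<Prod>i\<in>X. t * g i) * (\<Prod>i\<in>I-X. 1))"
    by (rule prod_add[OF fin])
  also have "\<dots> = (\<Sum>X\<in>Pow I. prod g X * t ^ card X)"
    by (simp add: prod.distrib mult_ac)
  also have "\<dots> = (\<Sum>k\<in>{..card I}. \<Sum>X\<in>{X \<in> Pow I. card X = k}. prod g X * t ^ card X)"
    by (rule sum.group[symmetric]) (use fin in \<open>auto intro: card_mono\<close>)
  also have "\<dots> = (\<Sum>k\<le>card I. (\<Sum>S\<in>{S. S \<subseteq> I \<and> card S = k}. prod g S) * t ^ k)"
    by (intro sum.cong refl) (auto simp: sum_distrib_right)
  finally show ?thesis by (simp add: add.commute)
qed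


definition fz :: "nat \<Rightarrow> nat \<Rightarrow> complex" where
  "fz n i = inverse (1 - zeta n ^ i)"

definition Ef :: "('a \<Rightarrow> complex) \<Rightarrow> 'a set \<Rightarrow> nat \<Rightarrow> complex" where
  "Ef g I k = (\<Sum>S\<in>{S. S \<subseteq> I \<and> card S = k}. prod g S)"

lemma E_val:
  assumes n: "n > 0"
  shows "Ef (fz n) {1..n-1} k = of_nat ((n-1) choose k) / of_nat (k+1)"
proof -
  define I where "I = {1..n-1}"
  have cI: "card I = n - 1" by (simp add: I_def)
  have ne: "1 - zeta n ^ i \<noteq> 0" if "i \<in> I" for i
    using zeta_ne1[of i n] that n by (auto simp: I_def; linarith)
  have P1: "(\<Prod>i\<in>I. 1 - zeta n ^ i) = of_nat n"
    using prod_zeta_1[OF n, of 1] by (simp add: I_def)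
  have un: "{..<n} = {..n-1}" using n by auto
  have key: "(\<Sum>k\<le>n-1. Ef (fz n) I k * t ^ k) = (\<Sum>k\<le>n-1. (of_nat (n choose Suc k) / of_nat n) * t ^ k)" for t
  proof -
    have "(\<Sum>k\<le>n-1. Ef (fz n) I k * t ^ k) = (\<Prod>i\<in>I. 1 + t * fz n i)"
      using prod_E[of I t "fz n"] cI by (simp add: I_def Ef_def)
    also have "\<dots> = (\<Prod>i\<in>I. (1 + t - zeta n ^ i) * inverse (1 - zeta n ^ i))"
      by (intro prod.cong refl) (use ne in \<open>auto simp: fz_def field_simps\<close>)
    also have "\<dots> = (\<Prod>i\<in>I. 1 + t - zeta n ^ i) * inverse (\<Prod>i\<in>I. 1 - zeta n ^ i)"
      using prod_inversef[of "\<lambda>i. 1 - zeta n ^ i" I] by (simp add: prod.distrib o_def)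
    also have "\<dots> = (\<Sum>k<n. (1 + t) ^ k) * inverse (of_nat n)"
      using prod_zeta_1[OF n, of "1 + t"] P1 by (simp add: I_def)
    also have "\<dots> = (\<Sum>k<n. of_nat (n choose Suc k) * t ^ k) * inverse (of_nat n)"
      by (simp only: binsum)
    also have "\<dots> = (\<Sum>k\<le>n-1. (of_nat (n choose Suc k) / of_nat n) * t ^ k)"
      unfolding un sum_distrib_right by (simp add: field_simps)
    finally show ?thesis .
  qed
  show ?thesis
  proof (cases "k \<le> n - 1")
    case True
    have "Ef (fz n) I k = of_nat (n choose Suc k) / of_nat n"
      using key polyfun_eq_coeffs[of "\<lambda>k. Ef (fz n) I k" "n-1" "\<lambda>k. of_nat (n choose Suc k) / of_nat n"] True
      by blast
    also have "\<dots> = of_nat ((n-1) choose k) / of_nat (k+1)"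
    proof -
      have "of_nat (Suc k * (n choose Suc k)) = (of_nat (n * ((n - 1) choose k)) :: complex)"
        by (simp only: binomial_absorption)
      moreover have "(1 + of_nat k :: complex) \<noteq> 0" by (metis of_nat_Suc of_nat_neq_0 add.commute)
      ultimately show ?thesis using n by (simp add: field_simps)
    qed
    finally show ?thesis by (simp add: I_def)
  next
    case False
    have "{S. S \<subseteq> I \<and> card S = k} = {}"
    proof (rule ccontr)
      assume "{S. S \<subseteq> I \<and> card S = k} \<noteq> {}"
      then obtain S where "S \<subseteq> I" "card S = k" by auto
      then have "k \<le> card I" by (metis card_mono finite_atLeastAtMost I_def)
      then show False using False cI by simp
    qed
    then have "Ef (fz n) {1..n-1} k = 0" by (simp only: Ef_def I_def sum.empty)
    then show ?thesis using False by (simp add: binomial_eq_0)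
  qed
qed


definition Wf :: "('a \<Rightarrow> complex) \<Rightarrow> 'a set \<Rightarrow> nat \<Rightarrow> nat \<Rightarrow> complex" where
  "Wf g I a c = (\<Sum>S\<in>{S. S \<subseteq> I \<and> card S = c}. \<Sum>A\<in>{A. A \<subseteq> S \<and> card A = a}. prod g S * prod g A)"

lemma fiber_card:
  assumes fin: "finite I" and AS: "A \<subseteq> S" and SI: "S \<subseteq> I" and cA: "card A = a"
    and am: "a \<le> m" and al: "a \<le> l" and cS: "card S = m + l - a"
  shows "card {p \<in> {M. M \<subseteq> I \<and> card M = m} \<times> {L. L \<subseteq> I \<and> card L = l}.
                 (fst p \<union> snd p, fst p \<inter> snd p) = (S, A)} = (m + l - 2 * a) choose (m - a)"
proof -
  let ?F = "{p \<in> {M. M \<subseteq> I \<and> card M = m} \<times> {L. L \<subseteq> I \<and> card L = l}.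
                 (fst p \<union> snd p, fst p \<inter> snd p) = (S, A)}"
  let ?D = "{D. D \<subseteq> S - A \<and> card D = m - a}"
  have finS: "finite S" using fin SI finite_subset by blast
  have finA: "finite A" using finS AS finite_subset by blast
  have "bij_betw (\<lambda>p. fst p - A) ?F ?D"
  proof (rule bij_betwI[where g = "\<lambda>D. (A \<union> D, S - D)"])
    show "(\<lambda>p. fst p - A) \<in> ?F \<rightarrow> ?D"
    proof
      fix p assume p: "p \<in> ?F"
      obtain M L where pML: "p = (M, L)" by force
      have M: "M \<subseteq> I" "card M = m" "M \<union> L = S" "M \<inter> L = A" using p pML by auto
      have "A \<subseteq> M" using M by auto
      then have "card (M - A) = m - a" using M cA finA by (simp add: card_Diff_subset)
      then show "fst p - A \<in> ?D" using M pML by auto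
    qed
    show "(\<lambda>D. (A \<union> D, S - D)) \<in> ?D \<rightarrow> ?F"
    proof
      fix D assume D: "D \<in> ?D"
      have DS: "D \<subseteq> S" "D \<inter> A = {}" using D by auto
      have finD: "finite D" using finS DS finite_subset by blast
      have c1: "card (A \<union> D) = m" using DS D cA am finA finD by (simp add: card_Un_disjoint Int_commute)
      have c2: "card (S - D) = l" using DS D cS am finD by (simp add: card_Diff_subset)
      show "(A \<union> D, S - D) \<in> ?F" using c1 c2 DS AS SI by auto
    qed
    show "(A \<union> (fst p - A), S - (fst p - A)) = p" if "p \<in> ?F" for p
      using that by auto
    show "(fst (A \<union> D, S - D) - A) = D" if "D \<in> ?D" for D
      using that by auto
  qed
  then have "card ?F = card ?D" by (rule bij_betw_same_card)
  also have "\<dots> = card (S - A) choose (m - a)" using finS by (simp add: n_subsets)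
  also have "card (S - A) = m + l - 2 * a" using finA AS cA cS am al by (simp add: card_Diff_subset)
  finally show ?thesis .
qed

lemma EE:
  fixes g :: "'a \<Rightarrow> complex"
  assumes fin: "finite I"
  shows "Ef g I m * Ef g I l = (\<Sum>a\<le>min m l. of_nat ((m + l - 2 * a) choose (m - a)) * Wf g I a (m + l - a))"
proof -
  define P where "P = {M. M \<subseteq> I \<and> card M = m} \<times> {L. L \<subseteq> I \<and> card L = l}"
  define T where "T = {(S, A). S \<subseteq> I \<and> A \<subseteq> S \<and> card A \<le> min m l \<and> card S + card A = m + l}"
  define \<phi> where "\<phi> = (\<lambda>p::'a set \<times> 'a set. (fst p \<union> snd p, fst p \<inter> snd p))"
  define G where "G = (\<lambda>q::'a set \<times> 'a set. prod g (fst q) * prod g (snd q))"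
  have finP: "finite P" unfolding P_def using fin by (intro finite_cartesian_product) auto
  have finT: "finite T"
  proof (rule finite_subset)
    show "T \<subseteq> Pow I \<times> Pow I" by (auto simp: T_def)
  qed (use fin in auto)
  have img: "\<phi> ` P \<subseteq> T"
  proof
    fix q assume "q \<in> \<phi> ` P"
    then obtain M L where hML: "M \<subseteq> I" "card M = m" "L \<subseteq> I" "card L = l" and q: "q = (M \<union> L, M \<inter> L)"
      by (auto simp: P_def \<phi>_def)
    have fM: "finite M" "finite L" using hML fin finite_subset by blast+
    have "card (M \<inter> L) \<le> m" "card (M \<inter> L) \<le> l" using hML fM by (auto intro: card_mono)
    moreover have "card (M \<union> L) + card (M \<inter> L) = m + l" using hML fM card_Un_Int by metis
    ultimately show "q \<in> T" using q hML by (auto simp: T_def)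
  qed
  have "Ef g I m * Ef g I l = (\<Sum>p\<in>P. prod g (fst p) * prod g (snd p))"
    unfolding Ef_def P_def by (simp add: sum_product sum.cartesian_product case_prod_beta)
  also have "\<dots> = (\<Sum>p\<in>P. G (\<phi> p))"
  proof (intro sum.cong refl)
    fix p assume "p \<in> P"
    then have "finite (fst p)" "finite (snd p)" using fin finite_subset by (auto simp: P_def)
    then show "prod g (fst p) * prod g (snd p) = G (\<phi> p)"
      by (simp add: G_def \<phi>_def prod.union_inter)
  qed
  also have "\<dots> = (\<Sum>q\<in>T. \<Sum>p\<in>{p \<in> P. \<phi> p = q}. G (\<phi> p))"
    by (rule sum.group[symmetric, OF finP finT img])
  also have "\<dots> = (\<Sum>q\<in>T. of_nat ((m + l - 2 * card (snd q)) choose (m - card (snd q))) * G q)"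
  proof (intro sum.cong refl)
    fix q assume q: "q \<in> T"
    obtain S A where qSA: "q = (S, A)" by force
    have h: "S \<subseteq> I" "A \<subseteq> S" "card A \<le> min m l" "card S + card A = m + l" using q qSA by (auto simp: T_def)
    have "(\<Sum>p\<in>{p \<in> P. \<phi> p = q}. G (\<phi> p)) = (\<Sum>p\<in>{p \<in> P. \<phi> p = q}. G q)" by simp
    also have "\<dots> = of_nat (card {p \<in> P. \<phi> p = q}) * G q" by simp
    also have "card {p \<in> P. \<phi> p = q} = (m + l - 2 * card A) choose (m - card A)"
      unfolding P_def \<phi>_def qSA
      by (rule fiber_card[OF fin h(2) h(1) refl]) (use h in auto)
    finally show "(\<Sum>p\<in>{p \<in> P. \<phi> p = q}. G (\<phi> p)) = of_nat ((m + l - 2 * card (snd q)) choose (m - card (snd q))) * G q"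
      by (simp add: qSA)
  qed
  also have "\<dots> = (\<Sum>a\<in>{..min m l}. \<Sum>q\<in>{q \<in> T. card (snd q) = a}. of_nat ((m + l - 2 * card (snd q)) choose (m - card (snd q))) * G q)"
    by (rule sum.group[symmetric, OF finT]) (auto simp: T_def)
  also have "\<dots> = (\<Sum>a\<le>min m l. of_nat ((m + l - 2 * a) choose (m - a)) * Wf g I a (m + l - a))"
  proof (intro sum.cong refl)
    fix a assume a: "a \<in> {..min m l}"
    have eqT: "{q \<in> T. card (snd q) = a} = Sigma {S. S \<subseteq> I \<and> card S = m + l - a} (\<lambda>S. {A. A \<subseteq> S \<and> card A = a})"
      using a by (auto simp: T_def)
    have fin1: "finite {S. S \<subseteq> I \<and> card S = m + l - a}" using fin by auto
    have fin2: "finite {A. A \<subseteq> S \<and> card A = a}" if "S \<in> {S. S \<subseteq> I \<and> card S = m + l - a}" for S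
    proof (rule finite_subset[of _ "Pow S"])
      show "finite (Pow S)" using that fin finite_subset by auto
    qed auto
    have "(\<Sum>q\<in>{q \<in> T. card (snd q) = a}. of_nat ((m + l - 2 * card (snd q)) choose (m - card (snd q))) * G q)
        = (\<Sum>q\<in>{q \<in> T. card (snd q) = a}. of_nat ((m + l - 2 * a) choose (m - a)) * G q)" by simp
    also have "\<dots> = of_nat ((m + l - 2 * a) choose (m - a)) * (\<Sum>q\<in>{q \<in> T. card (snd q) = a}. G q)"
      by (simp add: sum_distrib_left)
    also have "(\<Sum>q\<in>{q \<in> T. card (snd q) = a}. G q) = Wf g I a (m + l - a)"
      unfolding eqT Wf_def G_def using sum.Sigma[OF fin1 ballI[OF fin2], where g="\<lambda>S A. prod g S * prod g A"]
      by (simp add: case_prod_beta)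
    finally show "(\<Sum>q\<in>{q \<in> T. card (snd q) = a}. of_nat ((m + l - 2 * card (snd q)) choose (m - card (snd q))) * G q)
        = of_nat ((m + l - 2 * a) choose (m - a)) * Wf g I a (m + l - a)" .
  qed
  finally show ?thesis .
qed


lemma perm_sum:
  fixes g :: "nat \<Rightarrow> complex"
  assumes finS: "finite S" and cS: "card S = a + b"
  defines "xs \<equiv> sorted_list_of_set S"
  shows "(\<Sum>A\<in>{A. A \<subseteq> S \<and> card A = a}. prod g S * prod g A)
       = (\<Sum>t\<in>{t. mset t = mset (replicate a (2::nat) @ replicate b 1)}. \<Prod>k<a+b. g (xs ! k) ^ (t ! k))"
proof -
  let ?s = "replicate a (2::nat) @ replicate b 1"
  have dxs: "distinct xs" and sxs: "set xs = S" and lxs: "length xs = a + b"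
    using finS cS by (auto simp: xs_def)
  define j where "j = (\<lambda>A. map (\<lambda>i. if i \<in> A then 2 else (1::nat)) xs)"
  define i where "i = (\<lambda>t::nat list. {xs ! k |k. k < a + b \<and> t ! k = 2})"
  have cnt_s: "count (mset ?s) x = (if x = 2 then a else 0) + (if x = 1 then b else 0)" for x
    by auto
  show ?thesis
  proof (rule sum.reindex_bij_witness[where j = j and i = i])
    fix A assume A: "A \<in> {A. A \<subseteq> S \<and> card A = a}"
    show "i (j A) = A"
    proof
      show "i (j A) \<subseteq> A"
      proof
        fix y assume "y \<in> i (j A)"
        then obtain k where k: "k < a + b" "y = xs ! k" "j A ! k = 2" by (auto simp: i_def)
        then have "(if xs ! k \<in> A then 2 else (1::nat)) = 2" by (simp add: j_def lxs)
        then show "y \<in> A" using k by (auto split: if_splits)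
      qed
      show "A \<subseteq> i (j A)"
      proof
        fix y assume y: "y \<in> A"
        then have "y \<in> set xs" using A sxs by auto
        then obtain k where k: "k < length xs" "xs ! k = y" by (auto simp: in_set_conv_nth)
        then have "j A ! k = 2" using y by (simp add: j_def)
        then show "y \<in> i (j A)" using k lxs unfolding i_def by auto
      qed
    qed
    have "mset (j A) = mset ?s"
    proof (rule multiset_eqI)
      fix x
      have finA: "finite A" using A finS finite_subset by blast
      have "count (mset (j A)) x = card ({y. x = (if y \<in> A then 2 else 1)} \<inter> S)"
        unfolding j_def count_mset count_list_eq_length_filter filter_map length_map distinct_length_filter[OF dxs] sxs o_def by (rule refl)
      also have "\<dots> = (if x = 2 then a else 0) + (if x = 1 then b else 0)"
      proof -
        have "x = 2 \<Longrightarrow> {y. x = (if y \<in> A then 2 else 1)} \<inter> S = A" using A by auto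
        moreover have "x = 1 \<Longrightarrow> {y. x = (if y \<in> A then 2 else 1)} \<inter> S = S - A" using A by auto
        moreover have "x \<noteq> 1 \<Longrightarrow> x \<noteq> 2 \<Longrightarrow> {y. x = (if y \<in> A then 2 else 1)} \<inter> S = {}" by auto
        moreover have "card (S - A) = b" using A finA cS by (simp add: card_Diff_subset)
        ultimately show ?thesis using A by auto
      qed
      finally show "count (mset (j A)) x = count (mset ?s) x" by (simp only: cnt_s)
    qed
    then show "j A \<in> {t. mset t = mset ?s}" by (simp only: mem_Collect_eq)
    have "(\<Prod>k<a+b. g (xs ! k) ^ (j A ! k)) = (\<Prod>k<a+b. g (xs ! k) ^ (if xs ! k \<in> A then 2 else 1))"
      by (intro prod.cong refl) (simp add: j_def lxs)
    also have "\<dots> = (\<Prod>y\<in>S. g y ^ (if y \<in> A then 2 else 1))"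
      using prod.reindex_bij_betw[OF bij_betw_nth[OF dxs refl sxs[symmetric]], of "\<lambda>y. g y ^ (if y \<in> A then 2 else 1)"]
      by (simp add: lxs)
    also have "\<dots> = (\<Prod>y\<in>S. g y * (if y \<in> A then g y else 1))"
      by (intro prod.cong refl) (simp add: power2_eq_square)
    also have "\<dots> = prod g S * prod g (S \<inter> A)"
      unfolding prod.distrib prod.inter_restrict[OF finS] by (rule refl)
    also have "S \<inter> A = A" using A by auto
    finally show "(\<Prod>k<a+b. g (xs ! k) ^ (j A ! k)) = prod g S * prod g A" .
  next
    fix t assume t: "t \<in> {t. mset t = mset ?s}"
    then have mt: "mset t = mset ?s" by simp
    have lt: "length t = a + b" using mset_eq_length[OF mt] by simp
    have st: "set t \<subseteq> {1, 2}" using mset_eq_setD[OF mt] by auto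
    have mem: "xs ! k \<in> i t \<longleftrightarrow> t ! k = 2" if "k < a + b" for k
    proof
      assume "xs ! k \<in> i t"
      then obtain k' where "k' < a + b" "t ! k' = 2" "xs ! k = xs ! k'" by (auto simp: i_def)
      then show "t ! k = 2" using that dxs lxs by (simp add: nth_eq_iff_index_eq)
    qed (use that in \<open>auto simp: i_def\<close>)
    show "j (i t) = t"
    proof (rule nth_equalityI)
      show "length (j (i t)) = length t" by (simp add: j_def lxs lt)
      fix k assume "k < length (j (i t))"
      then have k: "k < a + b" by (simp add: j_def lxs)
      have "t ! k \<in> set t" using k lt by simp
      then have tk: "t ! k = 1 \<or> t ! k = 2" using st by blast
      have "j (i t) ! k = (if xs ! k \<in> i t then 2 else 1)" using k lxs by (simp add: j_def)
      then show "j (i t) ! k = t ! k" using mem[OF k] tk by auto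
    qed
    show "i t \<in> {A. A \<subseteq> S \<and> card A = a}"
    proof
      have sub: "i t \<subseteq> S" using lxs sxs by (auto simp: i_def)
      have "i t = (\<lambda>k. xs ! k) ` {k. k < length t \<and> t ! k = 2}" by (auto simp: i_def lt)
      moreover have "inj_on (\<lambda>k. xs ! k) {k. k < length t \<and> t ! k = 2}"
        using inj_on_nth[OF dxs] lt lxs by auto
      ultimately have "card (i t) = card {k. k < length t \<and> t ! k = 2}" by (simp add: card_image)
      also have "\<dots> = length (filter ((=) 2) t)" unfolding length_filter_conv_card by (rule arg_cong[where f=card]) auto
      also have "\<dots> = count (mset t) 2" by (simp add: count_mset count_list_eq_length_filter)
      also have "\<dots> = a" using mt cnt_s[of 2] by simp
      finally show "i t \<subseteq> S \<and> card (i t) = a" using sub by simp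
    qed
  qed
qed


lemma Ysum_W: "Ysum n (replicate a 2 @ replicate b 1) = Wf (fz n) {1..n-1} a (a + b)"
proof -
  let ?s = "replicate a (2::nat) @ replicate b 1"
  let ?T = "{t. mset t = mset ?s}"
  let ?SS = "{S. S \<subseteq> {1..n-1} \<and> card S = a + b}"
  let ?h = "\<lambda>S t. \<Prod>k<a+b. fz n (sorted_list_of_set S ! k) ^ (t ! k)"
  have finT: "finite ?T"
  proof (rule finite_subset)
    show "?T \<subseteq> {t. set t \<subseteq> set ?s \<and> length t = length ?s}"
    proof
      fix t assume "t \<in> ?T"
      then have mt: "mset t = mset ?s" by (simp only: mem_Collect_eq)
      have "set t = set ?s" by (rule mset_eq_setD[OF mt])
      moreover have "length t = length ?s" by (rule mset_eq_length[OF mt])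
      ultimately show "t \<in> {t. set t \<subseteq> set ?s \<and> length t = length ?s}" by simp
    qed
    show "finite {t. set t \<subseteq> set ?s \<and> length t = length ?s}"
      by (rule finite_lists_length_eq) simp
  qed
  have finSS: "finite ?SS" by auto
  have "Ysum n ?s = (\<Sum>t\<in>?T. \<Sum>S\<in>?SS. ?h S t)"
    unfolding Ysum_def
  proof (intro sum.cong refl)
    fix t assume "t \<in> ?T"
    then have mt: "mset t = mset ?s" by (simp only: mem_Collect_eq)
    have "length t = length ?s" by (rule mset_eq_length[OF mt])
    then have lt: "length t = a + b" by simp
    show "Zfrak n t = (\<Sum>S\<in>?SS. ?h S t)"
      unfolding Zfrak_def lt by (simp add: fz_def power_inverse)
  qed
  also have "\<dots> = (\<Sum>S\<in>?SS. \<Sum>t\<in>?T. ?h S t)" by (rule sum.swap)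
  also have "\<dots> = (\<Sum>S\<in>?SS. \<Sum>A\<in>{A. A \<subseteq> S \<and> card A = a}. prod (fz n) S * prod (fz n) A)"
  proof (intro sum.cong refl)
    fix S assume S: "S \<in> ?SS"
    have fS: "finite S" using S finite_subset by auto
    have cS: "card S = a + b" using S by (simp only: mem_Collect_eq)
    show "(\<Sum>t\<in>?T. ?h S t) = (\<Sum>A\<in>{A. A \<subseteq> S \<and> card A = a}. prod (fz n) S * prod (fz n) A)"
      by (rule perm_sum[OF fS cS, symmetric])
  qed
  also have "\<dots> = Wf (fz n) {1..n-1} a (a + b)" by (simp add: Wf_def)
  finally show ?thesis .
qed

lemma Wf_zero:
  assumes "finite I" "card I < c"
  shows "Wf g I a c = 0"
proof -
  have "{S. S \<subseteq> I \<and> card S = c} = {}"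
  proof (rule ccontr)
    assume "{S. S \<subseteq> I \<and> card S = c} \<noteq> {}"
    then obtain S where "S \<subseteq> I" "card S = c" by blast
    then have "c \<le> card I" using card_mono[OF assms(1)] by blast
    then show False using assms(2) by simp
  qed
  then show ?thesis by (simp only: Wf_def sum.empty)
qed


theorem theorem5:
  fixes n m l :: nat
  assumes "n > 0" and "m > 0" and "l > 0"
  shows "(\<Sum>j \<in> {0..int n - int m - 1}.
            (if int l - j < 0 \<or> int m - int l + 2 * j < 0 then 0
             else of_nat ((nat (int m - int l + 2 * j)) choose (nat j)) *
                  Ysum n (replicate (nat (int l - j)) 2 @ replicate (nat (int m - int l + 2 * j)) 1)))
         = (1 / (of_nat ((m + 1) * (l + 1)))) * of_nat ((n - 1) choose m) * of_nat ((n - 1) choose l)"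
proof -
  define I where "I = {1..n-1}"
  define W where "W = Wf (fz n) I"
  have finI: "finite I" and cI: "card I = n - 1" by (auto simp: I_def)
  define h where "h = (\<lambda>j::nat. if l < j \<or> m + 2 * j < l then 0
       else of_nat ((m + 2 * j - l) choose j) * W (l - j) (m + j))"
  have Wz: "W a c = 0" if "n - 1 < c" for a c
    unfolding W_def using Wf_zero[OF finI] cI that by simp
  have hz1: "h j = 0" if "n - m \<le> j" for j
  proof -
    have "n - 1 < m + j" using that assms by linarith
    then show ?thesis by (simp add: h_def Wz)
  qed
  have hz2: "h j = 0" if "j < l - min m l \<or> l < j" for j
  proof (cases "l < j \<or> m + 2 * j < l")
    case True then show ?thesis by (simp add: h_def)
  next
    case False
    then have "m + 2 * j - l < j" using that by auto
    then show ?thesis using False by (simp add: h_def binomial_eq_0)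
  qed
  have setI: "{0..int n - int m - 1} = int ` {..<n-m}"
  proof
    show "{0..int n - int m - 1} \<subseteq> int ` {..<n-m}"
    proof
      fix x assume x: "x \<in> {0..int n - int m - 1}"
      show "x \<in> int ` {..<n-m}"
        by (rule image_eqI[where x = "nat x"]) (use x in auto)
    qed
  qed auto
  have "(\<Sum>j \<in> {0..int n - int m - 1}.
            (if int l - j < 0 \<or> int m - int l + 2 * j < 0 then 0
             else of_nat ((nat (int m - int l + 2 * j)) choose (nat j)) *
                  Ysum n (replicate (nat (int l - j)) 2 @ replicate (nat (int m - int l + 2 * j)) 1)))
       = (\<Sum>j<n-m. h j)"
    unfolding setI
  proof (subst sum.reindex, simp, intro sum.cong refl)
    fix j assume "j \<in> {..<n-m}"
    show "((\<lambda>j. if int l - j < 0 \<or> int m - int l + 2 * j < 0 then 0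
             else of_nat ((nat (int m - int l + 2 * j)) choose (nat j)) *
                  Ysum n (replicate (nat (int l - j)) 2 @ replicate (nat (int m - int l + 2 * j)) 1)) \<circ> int) j = h j"
    proof (cases "l < j \<or> m + 2 * j < l")
      case True
      then show ?thesis by (auto simp: h_def)
    next
      case False
      have e1: "nat (int m - int l + 2 * int j) = m + 2 * j - l" using False by linarith
      have e2: "nat (int l - int j) = l - j" using False by linarith
      have e3: "l - j + (m + 2 * j - l) = m + j" using False by linarith
      have yw: "Ysum n (replicate (l - j) 2 @ replicate (m + 2 * j - l) 1) = W (l - j) (m + j)"
        unfolding W_def I_def Ysum_W e3 by (rule refl)
      show ?thesis using False
        by (simp only: h_def e1 e2 yw comp_def of_int_of_nat_eq if_False nat_int) simp
    qed
  qed
  also have "\<dots> = (\<Sum>j\<le>l+n. h j)"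
    by (rule sum.mono_neutral_left) (auto intro: hz1)
  also have "\<dots> = (\<Sum>j\<in>{l - min m l..l}. h j)"
    by (rule sum.mono_neutral_right) (auto intro: hz2)
  also have "\<dots> = (\<Sum>a\<le>min m l. of_nat ((m + l - 2 * a) choose (m - a)) * W a (m + l - a))"
  proof (rule sum.reindex_bij_witness[where i = "\<lambda>a. l - a" and j = "\<lambda>j. l - j"])
    fix j assume j: "j \<in> {l - min m l..l}"
    show "l - (l - j) = j" using j by auto
    show "l - j \<in> {..min m l}" using j by auto
    define a where "a = l - j"
    have a: "a \<le> min m l" "j = l - a" using j by (auto simp: a_def)
    have g: "\<not> (l < j \<or> m + 2 * j < l)" using a by auto
    have e1: "m + 2 * j - l = m + l - 2 * a" using a by auto
    have e2: "l - j = a" "m + j = m + l - a" using a by auto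
    have e3: "(m + l - 2 * a) choose j = (m + l - 2 * a) choose (m - a)"
    proof -
      have "m - a = (m + l - 2 * a) - j" using a by auto
      then show ?thesis using binomial_symmetric[of j "m + l - 2 * a"] a by auto
    qed
    show "of_nat ((m + l - 2 * (l - j)) choose (m - (l - j))) * W (l - j) (m + l - (l - j)) = h j"
      using g by (simp add: h_def e1 e2 e3 a_def[symmetric])
  next
    fix a assume a: "a \<in> {..min m l}"
    show "l - (l - a) = a" using a by auto
    show "l - a \<in> {l - min m l..l}" using a by auto
  qed
  also have "\<dots> = Ef (fz n) I m * Ef (fz n) I l"
    unfolding W_def by (rule EE[OF finI, symmetric])
  also have "\<dots> = (1 / (of_nat ((m + 1) * (l + 1)))) * of_nat ((n - 1) choose m) * of_nat ((n - 1) choose l)"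
    unfolding I_def E_val[OF assms(1)] by (simp add: field_simps)
  finally show ?thesis .
qed

end
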